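(* Let $k\ge 2$ and let $P,Q$ be distributions over $x=(x_1,\dots,x_k)$ with $x_i\in\{1,\dots,r_i\}$, and assume $P(x_i=t)>0$ for all $i\in[k]$, $t\in[r_i]$. Let $\mathcal{F}=\{\sum_{i=1}^k f_i(x_i)\}$ with $f_i:\{1,\dots,r_i\}\to\mathbb{R}$ arbitrary, and $r=\sum_{i=1}^k r_i$. Then $$\tau(P,Q,\mathcal{F})=\sup_{v\in\mathbb{R}^{r}}\frac{v^\top K_Q v}{v^\top K_P v}\le \frac{k}{\lambda_k(\bar K_P)}\max_{i\in[k],\,t\in[r_i]}\frac{Q(x_i=t)}{P(x_i=t)}$$ (the supremum using the convention $0/0=0$, and the bound interpreted as $+\infty$ if $\lambda_k(\bar K_P)=0$).
   Context: $\tau(P,Q,\mathcal{F})=\sup_{f,g\in\mathcal{F}}\mathbb{E}_Q[(f(x)-g(x))^2]/\mathbb{E}_P[(f(x)-g(x))^2]$ with the convention $0/0=0$. For a distribution $P$, define blocks $P_{ij}\in\mathbb{R}^{r_i\times r_j}$ by $[P_{ij}]_{a,b}=P(x_i=a,x_j=b)$ for $i\ne j$, and $P_{ii}\in\mathbb{R}^{r_i\times r_i}$ diagonal with $[P_{ii}]_{a,a}=P(x_i=a)$. Let $K_P\in\mathbb{R}^{r\times r}$ be the block matrix with $(i,j)$ block $P_{ij}$, and $\bar K_P=\mathrm{diag}(K_P)^{-1/2}K_P\,\mathrm{diag}(K_P)^{-1/2}$, where $\mathrm{diag}(K_P)$ keeps only the diagonal entries of $K_P$; $K_Q$ is defined analogously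 from $Q$. $\lambda_k(M)$ denotes the $k$-th smallest eigenvalue of a symmetric matrix $M$. *)

theory Defs
  imports "Jordan_Normal_Form.Char_Poly" "HOL-Probability.Probability_Mass_Function"
begin

text \<open>Variables are indexed 0-based: coordinates i < k, and x_i ranges over {0..<r i}
  (the paper's {1..r_i} shifted by one).\<close>

definition sample_space :: "nat \<Rightarrow> (nat \<Rightarrow> nat) \<Rightarrow> (nat \<Rightarrow> nat) set" where
  "sample_space k r = PiE {..<k} (\<lambda>i. {..<r i})"

definition marg :: "(nat \<Rightarrow> nat) pmf \<Rightarrow> nat \<Rightarrow> nat \<Rightarrow> real" where
  "marg P i a = measure_pmf.prob P {x. x i = a}"

definition marg2 :: "(nat \<Rightarrow> nat) pmf \<Rightarrow> nat \<Rightarrow> nat \<Rightarrow> nat \<Rightarrow> nat \<Rightarrow> real" where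
  "marg2 P i a j b = measure_pmf.prob P {x. x i = a \<and> x j = b}"

definition additive_class :: "nat \<Rightarrow> ((nat \<Rightarrow> nat) \<Rightarrow> real) set" where
  "additive_class k = {(\<lambda>x. \<Sum>i<k. fs i (x i)) | fs :: nat \<Rightarrow> nat \<Rightarrow> real. True}"

definition eratio :: "real \<Rightarrow> real \<Rightarrow> ereal" where
  "eratio a b = (if b = 0 then (if a = 0 then 0 else \<infinity>) else ereal (a / b))"

definition transfer_coeff ::
  "(nat \<Rightarrow> nat) pmf \<Rightarrow> (nat \<Rightarrow> nat) pmf \<Rightarrow> ((nat \<Rightarrow> nat) \<Rightarrow> real) set \<Rightarrow> ereal" where
  "transfer_coeff P Q F =
     (SUP fg \<in> F \<times> F. eratio
        (measure_pmf.expectation Q (\<lambda>x. (fst fg x - snd fg x)\<^sup>2))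
        (measure_pmf.expectation P (\<lambda>x. (fst fg x - snd fg x)\<^sup>2)))"

text \<open>Block layout of indices 0..<r (r = \<Sum>_{i<k} r_i): global index p belongs to block
  blk r p and has position pos r p inside it; block i occupies
  [\<Sum>_{j<i} r_j, \<Sum>_{j\<le>i} r_j).\<close>
definition blk :: "(nat \<Rightarrow> nat) \<Rightarrow> nat \<Rightarrow> nat" where
  "blk r p = (LEAST i. p < (\<Sum>j<Suc i. r j))"

definition pos :: "(nat \<Rightarrow> nat) \<Rightarrow> nat \<Rightarrow> nat" where
  "pos r p = p - (\<Sum>j<blk r p. r j)"

definition Kmat :: "nat \<Rightarrow> (nat \<Rightarrow> nat) \<Rightarrow> (nat \<Rightarrow> nat) pmf \<Rightarrow> real mat" where
  "Kmat k r P = Matrix.mat (\<Sum>i<k. r i) (\<Sum>i<k. r i) (\<lambda>(p, q).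
     (let i = blk r p; a = pos r p; j = blk r q; b = pos r q in
      if i = j then (if a = b then marg P i a else 0) else marg2 P i a j b))"

definition normalize_mat :: "real mat \<Rightarrow> real mat" where
  "normalize_mat K = (let D = Matrix.mat (dim_row K) (dim_row K)
       (\<lambda>(p, q). if p = q then 1 / sqrt (K $$ (p, p)) else 0) in D * K * D)"

text \<open>k-th smallest eigenvalue (1-based k, counted with multiplicity) of a real matrix
  whose characteristic polynomial splits over the reals (e.g. a symmetric one).\<close>
definition kth_smallest_eig :: "nat \<Rightarrow> real mat \<Rightarrow> real" where
  "kth_smallest_eig k M = sorted_list_of_multiset (proots (char_poly M)) ! (k - 1)"

end

theory Submission
  imports Defs "Jordan_Normal_Form.Schur_Decomposition"
begin

no_notation vec_nth (infixl "$" 90)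



lemma real_root_sym:
  fixes A :: "real mat"
  assumes A: "A \<in> carrier_mat n n" and sym: "A\<^sup>T = A" and n: "n > 0"
  shows "\<exists>e. poly (char_poly A) e = 0"
proof -
  define C where "C = map_mat complex_of_real A"
  have C: "C \<in> carrier_mat n n" using A by (simp add: C_def)
  obtain as where cp: "char_poly C = (\<Prod>a\<leftarrow>as. [:- a, 1:])" and las: "length as = n"
    using char_poly_factorized[OF C] by blast
  then obtain z rest where as: "as = z # rest" using n by (cases as) auto
  have "poly (char_poly C) z = 0" unfolding cp as by simp
  hence "eigenvalue C z" using eigenvalue_root_char_poly[OF C] by simp
  hence ev: "eigenvector C (find_eigenvector C z) z" using find_eigenvector[OF C] by blast
  define u where "u = find_eigenvector C z"
  have u: "u \<in> carrier_vec n" and u0: "u \<noteq> 0\<^sub>v n" and Cu: "C *\<^sub>v u = z \<cdot>\<^sub>v u"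
    using ev C unfolding eigenvector_def u_def by auto
  have Cui: "(C *\<^sub>v u) $ i = (\<Sum>j<n. complex_of_real (A $$ (i,j)) * u $ j)" if "i < n" for i
    using that A u by (auto simp: C_def scalar_prod_def atLeast0LessThan)
  define L where "L = (\<Sum>i<n. cnj (u $ i) * (C *\<^sub>v u) $ i)"
  define S where "S = (\<Sum>i<n. cnj (u $ i) * u $ i)"
  have LS: "L = z * S" unfolding L_def S_def Cu using u
    by (auto simp: sum_distrib_left intro!: sum.cong)
  have L2: "L = (\<Sum>i<n. \<Sum>j<n. cnj (u $ i) * complex_of_real (A $$ (i,j)) * u $ j)"
    unfolding L_def by (auto simp: Cui sum_distrib_left mult.assoc intro!: sum.cong)
  have symA: "A $$ (i,j) = A $$ (j,i)" if "i < n" "j < n" for i j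
    using arg_cong[OF sym, of "\<lambda>M. M $$ (i,j)"] that A by auto
  have "cnj L = (\<Sum>i<n. \<Sum>j<n. u $ i * complex_of_real (A $$ (i,j)) * cnj (u $ j))"
    unfolding L2 by (simp add: cnj_sum)
  also have "\<dots> = (\<Sum>j<n. \<Sum>i<n. u $ i * complex_of_real (A $$ (i,j)) * cnj (u $ j))"
    by (rule sum.swap)
  also have "\<dots> = L" unfolding L2
    by (auto intro!: sum.cong simp: symA mult.commute mult.left_commute)
  finally have cL: "cnj L = L" .
  have Sre: "S = complex_of_real (\<Sum>i<n. (cmod (u $ i))\<^sup>2)"
    unfolding S_def of_real_sum by (intro sum.cong refl) (metis complex_norm_square mult.commute)
  obtain i where i: "i < n" "u $ i \<noteq> 0"
    using u u0 by (metis carrier_vecD eq_vecI index_zero_vec)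
  have "(\<Sum>i<n. (cmod (u $ i))\<^sup>2) > 0"
  proof -
    have "(\<Sum>i<n. (cmod (u $ i))\<^sup>2) \<ge> (cmod (u $ i))\<^sup>2"
      by (rule member_le_sum) (use i in auto)
    moreover have "(cmod (u $ i))\<^sup>2 > 0" using i by auto
    ultimately show ?thesis by linarith
  qed
  hence S0: "S \<noteq> 0" and cS: "cnj S = S" unfolding Sre by (auto simp del: of_real_sum of_real_power)
  have z: "z = L / S" using LS S0 by auto
  have "cnj z = z" unfolding z using cL cS by (simp)
  hence "Im z = 0" by (metis cnj.simps(2) neg_equal_zero)
  hence zr: "z = complex_of_real (Re z)" by (simp add: complex_eq_iff)
  have "complex_of_real (poly (char_poly A) (Re z)) = poly (char_poly C) z"
    unfolding C_def of_real_hom.char_poly_hom[OF A] 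
    by (subst zr, induct "char_poly A") (auto simp: map_poly_pCons)
  also have "\<dots> = 0" by fact
  finally show ?thesis by auto
qed


definition diagm :: "real list \<Rightarrow> real mat" where
  "diagm es = Matrix.mat (length es) (length es) (\<lambda>(i,j). if i = j then es ! i else 0)"

lemma diagm_carrier[simp]: "diagm es \<in> carrier_mat (length es) (length es)"
  unfolding diagm_def by simp

lemma conj_real_vec[simp]: "conjugate (v :: real Matrix.vec) = v"
  by (rule eq_vecI) auto

lemma mult3_diag_entry:
  fixes B :: "real mat"
  assumes B: "B \<in> carrier_mat n n" and es: "length es = n" and i: "i < n" and j: "j < n"
  shows "(B * diagm es * B\<^sup>T) $$ (i,j) = (\<Sum>l<n. B $$ (i,l) * es ! l * B $$ (j,l))"
proof -
  have BD: "(B * diagm es) $$ (i,l) = B $$ (i,l) * es ! l" if "l < n" for l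
  proof -
    have "(B * diagm es) $$ (i,l) = (\<Sum>t\<in>{0..<n}. B $$ (i,t) * (if t = l then es ! l else 0))"
      using B es i that by (auto simp: scalar_prod_def diagm_def intro!: sum.cong)
    also have "\<dots> = B $$ (i,l) * es ! l" using that
      by (simp add: if_distrib[of "\<lambda>x. _ * x"] sum.delta cong: if_cong)
    finally show ?thesis .
  qed
  have "(B * diagm es * B\<^sup>T) $$ (i,j) = (\<Sum>l\<in>{0..<n}. (B * diagm es) $$ (i,l) * B $$ (j,l))"
    using B es i j by (auto simp: scalar_prod_def diagm_def intro!: sum.cong)
  also have "\<dots> = (\<Sum>l<n. B $$ (i,l) * es ! l * B $$ (j,l))"
    using BD by (auto simp: atLeast0LessThan intro!: sum.cong)
  finally show ?thesis .
qed

lemma char_poly_orth: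
  fixes W :: "real mat"
  assumes W: "W \<in> carrier_mat n n" and WW: "W\<^sup>T * W = 1\<^sub>m n" and es: "length es = n"
    and A: "A = W * diagm es * W\<^sup>T"
  shows "char_poly A = (\<Prod>a\<leftarrow>es. [:- a, 1:])"
proof -
  have WW': "W * W\<^sup>T = 1\<^sub>m n"
    using mat_mult_left_right_inverse[of "W\<^sup>T" n W] W WW by auto
  have D: "diagm es \<in> carrier_mat n n" using es by auto
  have "similar_mat_wit A (diagm es) W (W\<^sup>T)"
    unfolding similar_mat_wit_def Let_def using W D WW WW' A by auto
  hence "char_poly A = char_poly (diagm es)"
    by (intro char_poly_similar) (auto simp: similar_mat_def)
  also have "\<dots> = (\<Prod>a\<leftarrow>diag_mat (diagm es). [:- a, 1:])"
    by (rule char_poly_upper_triangular[OF D]) (auto simp: upper_triangular_def diagm_def es)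
  also have "diag_mat (diagm es) = es"
    unfolding diag_mat_def by (rule nth_equalityI) (auto simp: diagm_def)
  finally show ?thesis .
qed

lemma UAU_entry:
  fixes U A :: "real mat"
  assumes U: "U \<in> carrier_mat n n" and A: "A \<in> carrier_mat n n" and i: "i < n" and j: "j < n"
  shows "(U\<^sup>T * A * U) $$ (i,j) = col U i \<bullet> (A *\<^sub>v col U j)"
proof -
  have "U\<^sup>T * A * U = U\<^sup>T * (A * U)" using U A by (simp add: assoc_mult_mat[of _ n n _ n _ n])
  thus ?thesis using U A i j by (simp add: col_mult2[of _ n n _ n] mult_mat_vec_def)
qed

lemma sym_entry: "A\<^sup>T = A \<Longrightarrow> A \<in> carrier_mat n n \<Longrightarrow> i < n \<Longrightarrow> j < n \<Longrightarrow> A $$ (i,j) = A $$ (j,i)"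
  by (metis index_transpose_mat(1) carrier_matD)

lemma spectral:
  fixes A :: "real mat"
  assumes "A \<in> carrier_mat n n" "A\<^sup>T = A"
  shows "\<exists>W es. W \<in> carrier_mat n n \<and> W\<^sup>T * W = 1\<^sub>m n \<and> length es = n \<and> sorted es
     \<and> A = W * diagm es * W\<^sup>T"
  using assms
proof (induct n arbitrary: A)
  case 0
  show ?case
    by (rule exI[of _ "1\<^sub>m 0"], rule exI[of _ "[]"]) (use 0 in \<open>auto intro!: eq_matI simp: diagm_def\<close>)
next
  case (Suc m A)
  define n where "n = Suc m"
  have A: "A \<in> carrier_mat n n" and sym: "A\<^sup>T = A" using Suc n_def by auto
  define R where "R = {x. poly (char_poly A) x = 0}"
  have cp0: "char_poly A \<noteq> 0" using degree_monic_char_poly[OF A] by (metis coeff_0 zero_neq_one)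
  have finR: "finite R" unfolding R_def using poly_roots_finite[OF cp0] .
  have neR: "R \<noteq> {}" using real_root_sym[OF A sym] unfolding R_def n_def by auto
  define e where "e = Min R"
  have eR: "e \<in> R" unfolding e_def using finR neR by simp
  have emin: "\<And>x. x \<in> R \<Longrightarrow> e \<le> x" unfolding e_def using finR by simp
  have "eigenvalue A e" using eR eigenvalue_root_char_poly[OF A] unfolding R_def by simp
  hence ev: "eigenvector A (find_eigenvector A e) e" using find_eigenvector[OF A] by blast
  define v where "v = find_eigenvector A e"
  have v: "v \<in> carrier_vec n" and v0: "v \<noteq> 0\<^sub>v n" and Av: "A *\<^sub>v v = e \<cdot>\<^sub>v v"
    using ev A unfolding eigenvector_def v_def by auto
  interpret cof_vec_space n "TYPE(real)" .
  define b where "b = basis_completion v"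
  from basis_completion[OF v v0, folded b_def]
  have dist_b: "distinct b" and indep: "\<not> lin_dep (set b)" and bc: "set b \<subseteq> carrier_vec n"
    and hdb: "hd b = v" and len_b: "length b = n" by auto
  from hdb len_b obtain vs where bv: "b = v # vs" unfolding n_def by (cases b, auto)
  define ws where "ws = gram_schmidt n b"
  from gram_schmidt_result[OF bc dist_b indep refl, folded ws_def]
  have wsc: "set ws \<subseteq> carrier_vec n" and orth: "corthogonal ws" and lws: "length ws = n"
    by (auto simp: len_b)
  from gram_schmidt_hd[OF v, of vs, folded bv] have hdws: "hd ws = v" unfolding ws_def .
  have ws0: "ws ! 0 = v" using hdws lws unfolding n_def by (cases ws) auto
  have wsi: "ws ! i \<in> carrier_vec n" if "i < n" for i using wsc lws that by auto
  have wo: "ws ! i \<bullet> ws ! j = 0 \<longleftrightarrow> i \<noteq> j" if "i < n" "j < n" for i j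
    using corthogonalD[OF orth, of i j] that lws by simp
  have wpos: "ws ! i \<bullet> ws ! i > 0" if "i < n" for i
  proof -
    have "ws ! i \<bullet> ws ! i \<ge> 0" using wsi[OF that]
      by (auto simp: scalar_prod_def intro!: sum_nonneg)
    with wo[OF that that] show ?thesis by auto
  qed
  define c where "c i = 1 / sqrt (ws ! i \<bullet> ws ! i)" for i
  define us where "us = map (\<lambda>i. c i \<cdot>\<^sub>v ws ! i) [0..<n]"
  have lus: "length us = n" unfolding us_def by simp
  have usi: "us ! i = c i \<cdot>\<^sub>v ws ! i" if "i < n" for i unfolding us_def using that by simp
  have usc: "us ! i \<in> carrier_vec n" if "i < n" for i using usi[OF that] wsi[OF that] by simp
  have uo: "us ! i \<bullet> us ! j = (if i = j then 1 else 0)" if "i < n" "j < n" for i j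
  proof -
    have "us ! i \<bullet> us ! j = c i * c j * (ws ! i \<bullet> ws ! j)"
      unfolding usi[OF that(1)] usi[OF that(2)] using wsi[OF that(1)] wsi[OF that(2)] by simp
    also have "\<dots> = (if i = j then 1 else 0)"
      using wo[OF that] wpos[OF that(1)] unfolding c_def
      by (auto simp: field_simps)
    finally show ?thesis .
  qed
  define U where "U = mat_of_cols n us"
  have U: "U \<in> carrier_mat n n" unfolding U_def using mat_of_cols_carrier(1)[of n us] lus by simp
  have colU: "col U i = us ! i" if "i < n" for i unfolding U_def using that lus usc[OF that] by simp
  have UtU: "U\<^sup>T * U = 1\<^sub>m n"
    by (rule eq_matI) (use U in \<open>auto simp: colU uo\<close>)
  have UUt: "U * U\<^sup>T = 1\<^sub>m n"
    using mat_mult_left_right_inverse[of "U\<^sup>T" n U] U UtU by auto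
  have Au0: "A *\<^sub>v us ! 0 = e \<cdot>\<^sub>v us ! 0"
    using Av v A unfolding usi[of 0, unfolded n_def, simplified] ws0 by (simp add: mult_mat_vec smult_smult_assoc mult.commute)
  define A' where "A' = U\<^sup>T * A * U"
  have A'c: "A' \<in> carrier_mat n n" unfolding A'_def using U A by auto
  have A'e: "A' $$ (i,j) = us ! i \<bullet> (A *\<^sub>v us ! j)" if "i < n" "j < n" for i j
    unfolding A'_def using UAU_entry[OF U A that] colU that by simp
  have A'sym: "A'\<^sup>T = A'"
    unfolding A'_def using U A sym
    by (simp add: transpose_mult[of _ n n _ n] assoc_mult_mat[of _ n n _ n _ n])
  have A'0: "A' $$ (i,0) = (if i = 0 then e else 0)" if "i < n" for i
    using that A'e[OF that, of 0] unfolding n_def Au0 using uo[of i 0] usc[of i] usc[of 0]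
    by (auto simp: n_def)
  define A3 where "A3 = Matrix.mat m m (\<lambda>(i,j). A' $$ (Suc i, Suc j))"
  have A3c: "A3 \<in> carrier_mat m m" unfolding A3_def by simp
  have A3sym: "A3\<^sup>T = A3"
    by (rule eq_matI) (use sym_entry[OF A'sym A'c] in \<open>auto simp: A3_def n_def\<close>)
  from Suc(1)[OF A3c A3sym] obtain W3 es3 where W3: "W3 \<in> carrier_mat m m"
    and W3o: "W3\<^sup>T * W3 = 1\<^sub>m m" and les3: "length es3 = m" and ses3: "sorted es3"
    and A3eq: "A3 = W3 * diagm es3 * W3\<^sup>T" by blast
  define B1 where "B1 = Matrix.mat n n (\<lambda>(i,j). if i = 0 then (if j = 0 then 1 else 0)
     else if j = 0 then 0 else W3 $$ (i - 1, j - 1))"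
  have B1: "B1 \<in> carrier_mat n n" unfolding B1_def by simp
  define es where "es = e # es3"
  have les: "length es = n" unfolding es_def n_def using les3 by simp
  have A'eq: "A' = B1 * diagm es * B1\<^sup>T"
  proof (rule eq_matI)
    show "dim_row A' = dim_row (B1 * diagm es * B1\<^sup>T)" "dim_col A' = dim_col (B1 * diagm es * B1\<^sup>T)"
      using A'c B1 les by auto
    fix i j assume "i < dim_row (B1 * diagm es * B1\<^sup>T)" "j < dim_col (B1 * diagm es * B1\<^sup>T)"
    hence ij: "i < n" "j < n" using B1 les by auto
    have rhs: "(B1 * diagm es * B1\<^sup>T) $$ (i,j) = (\<Sum>l<n. B1 $$ (i,l) * es ! l * B1 $$ (j,l))"
      by (rule mult3_diag_entry[OF B1 les ij])
    also have "\<dots> = B1 $$ (i,0) * e * B1 $$ (j,0) + (\<Sum>l<m. B1 $$ (i,Suc l) * es3 ! l * B1 $$ (j,Suc l))"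
      unfolding n_def by (subst sum.lessThan_Suc_shift) (simp add: es_def)
    finally have rhs: "(B1 * diagm es * B1\<^sup>T) $$ (i,j) = \<dots>" .
    show "A' $$ (i,j) = (B1 * diagm es * B1\<^sup>T) $$ (i,j)"
    proof (cases "i = 0")
      case True
      thus ?thesis unfolding rhs using A'0[OF ij(2)] sym_entry[OF A'sym A'c ij] ij
        by (auto simp: B1_def n_def)
    next
      case False
      then obtain i' where i': "i = Suc i'" by (cases i) auto
      show ?thesis
      proof (cases "j = 0")
        case True
        thus ?thesis unfolding rhs using A'0[OF ij(1)] ij False by (auto simp: B1_def n_def)
      next
        case False
        then obtain j' where j': "j = Suc j'" by (cases j) auto
        have "A' $$ (i,j) = A3 $$ (i',j')" using ij i' j' by (simp add: A3_def n_def)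
        also have "\<dots> = (\<Sum>l<m. W3 $$ (i',l) * es3 ! l * W3 $$ (j',l))"
          unfolding A3eq by (rule mult3_diag_entry[OF W3 les3]) (use ij i' j' in \<open>auto simp: n_def\<close>)
        finally show ?thesis unfolding rhs using ij i' j' by (auto simp: B1_def n_def)
      qed
    qed
  qed
  have B1o: "B1\<^sup>T * B1 = 1\<^sub>m n"
  proof (rule eq_matI)
    fix i j assume "i < dim_row (1\<^sub>m n)" "j < dim_col (1\<^sub>m n)"
    hence ij: "i < n" "j < n" by auto
    have "(B1\<^sup>T * B1) $$ (i,j) = (\<Sum>l<n. B1 $$ (l,i) * B1 $$ (l,j))"
      using ij B1 by (auto simp: scalar_prod_def atLeast0LessThan intro!: sum.cong)
    also have "\<dots> = B1 $$ (0,i) * B1 $$ (0,j) + (\<Sum>l<m. B1 $$ (Suc l,i) * B1 $$ (Suc l,j))"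
      unfolding n_def by (subst sum.lessThan_Suc_shift) simp
    also have "\<dots> = 1\<^sub>m n $$ (i,j)"
    proof (cases "i = 0 \<or> j = 0")
      case True thus ?thesis using ij by (auto simp: B1_def n_def)
    next
      case False
      then obtain i' j' where i': "i = Suc i'" and j': "j = Suc j'" by (cases i; cases j) auto
      have "(\<Sum>l<m. B1 $$ (Suc l,i) * B1 $$ (Suc l,j)) = (\<Sum>l<m. W3 $$ (l,i') * W3 $$ (l,j'))"
        using ij i' j' by (auto simp: B1_def n_def intro!: sum.cong)
      also have "\<dots> = (W3\<^sup>T * W3) $$ (i',j')"
        using ij i' j' W3 by (auto simp: scalar_prod_def atLeast0LessThan n_def intro!: sum.cong)
      also have "\<dots> = 1\<^sub>m n $$ (i,j)" unfolding W3o using ij i' j' by (auto simp: n_def)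
      finally show ?thesis using i' j' ij by (simp add: B1_def n_def)
    qed
    finally show "(B1\<^sup>T * B1) $$ (i,j) = 1\<^sub>m n $$ (i,j)" .
  qed (use B1 in auto)
  define W where "W = U * B1"
  have Wc: "W \<in> carrier_mat n n" unfolding W_def using U B1 by auto
  have Wo: "W\<^sup>T * W = 1\<^sub>m n"
  proof -
    have "W\<^sup>T * W = B1\<^sup>T * (U\<^sup>T * U) * B1"
      unfolding W_def using U B1
      by (simp add: transpose_mult[of _ n n _ n] assoc_mult_mat[of _ n n _ n _ n])
    thus ?thesis using UtU B1o B1 by simp
  qed
  have AU: "A = U * A' * U\<^sup>T"
  proof -
    have "U * A' * U\<^sup>T = (U * U\<^sup>T) * A * (U * U\<^sup>T)"
      unfolding A'_def using U A by (simp add: assoc_mult_mat[of _ n n _ n _ n])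
    thus ?thesis using UUt A by simp
  qed
  have AW: "A = W * diagm es * W\<^sup>T"
  proof -
    have D: "diagm es \<in> carrier_mat n n" using les by auto
    have "A = U * (B1 * diagm es * B1\<^sup>T) * U\<^sup>T" using AU A'eq by simp
    also have "\<dots> = W * diagm es * W\<^sup>T"
      unfolding W_def using U B1 D
      by (simp add: transpose_mult[of _ n n _ n] assoc_mult_mat[of _ n n _ n _ n])
    finally show ?thesis .
  qed
  have cpA: "char_poly A = (\<Prod>a\<leftarrow>es. [:- a, 1:])" by (rule char_poly_orth[OF Wc Wo les AW])
  have "sorted es"
  proof -
    have "e \<le> x" if "x \<in> set es3" for x
    proof -
      have "poly (char_poly A) x = 0" unfolding cpA es_def using that
        by (simp add: poly_prod_list prod_list_zero_iff)
      thus ?thesis using emin unfolding R_def by auto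
    qed
    thus ?thesis using ses3 unfolding es_def by simp
  qed
  thus ?case using Wc Wo les AW unfolding n_def by blast
qed


lemma proots_prod_lin: "proots (\<Prod>a\<leftarrow>es. [:- a, 1:]) = mset (es :: real list)"
proof (induct es)
  case (Cons a es)
  have nz: "(\<Prod>a\<leftarrow>es. [:- a, 1:]) \<noteq> (0 :: real poly)"
    using prod_list_zero_iff[of "map (\<lambda>a. [:-a,1::real:]) es"] by auto
  have "proots ([:- a, 1:] * (\<Prod>a\<leftarrow>es. [:- a, 1:])) = proots [:- a, 1:] + proots (\<Prod>a\<leftarrow>es. [:- a, 1:])"
    by (rule proots_mult) (use nz in auto)
  thus ?case using Cons by (simp add: proots_linear_factor)
qed simp

lemma mult_zero_vec_right[simp]: "W \<in> carrier_mat n m \<Longrightarrow> W *\<^sub>v 0\<^sub>v m = (0\<^sub>v n :: 'a :: semiring_0 Matrix.vec)"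
  by (auto intro!: eq_vecI simp: scalar_prod_def)

lemma inj_imp_surj_mat:
  fixes M :: "real mat"
  assumes M: "M \<in> carrier_mat m m" and inj: "\<And>c. c \<in> carrier_vec m \<Longrightarrow> M *\<^sub>v c = 0\<^sub>v m \<Longrightarrow> c = 0\<^sub>v m"
    and t: "t \<in> carrier_vec m"
  shows "\<exists>c \<in> carrier_vec m. M *\<^sub>v c = t"
proof -
  have "Determinant.det M \<noteq> 0" using det_0_iff_vec_prod_zero[OF M] inj by blast
  from det_non_zero_imp_unit[OF M this] obtain N where N: "N \<in> carrier_mat m m" and MN: "M * N = 1\<^sub>m m"
    unfolding Units_def ring_mat_def by auto
  have "M *\<^sub>v (N *\<^sub>v t) = (M * N) *\<^sub>v t" using M N t by simp
  thus ?thesis using MN t N by (intro bexI[of _ "N *\<^sub>v t"]) auto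
qed

lemma core:
  fixes A G :: "real mat" and w :: "real Matrix.vec"
  assumes A: "A \<in> carrier_mat n n" and sym: "A\<^sup>T = A"
    and psd: "\<And>x. x \<in> carrier_vec n \<Longrightarrow> x \<bullet> (A *\<^sub>v x) \<ge> 0"
    and G: "G \<in> carrier_mat n (k - 1)"
    and ker: "\<And>c. c \<in> carrier_vec (k - 1) \<Longrightarrow> A *\<^sub>v (G *\<^sub>v c) = 0\<^sub>v n"
    and injG: "\<And>c. c \<in> carrier_vec (k - 1) \<Longrightarrow> G *\<^sub>v c = 0\<^sub>v n \<Longrightarrow> c = 0\<^sub>v (k - 1)"
    and k: "1 \<le> k" "k \<le> n"
    and w: "w \<in> carrier_vec n"
  shows "kth_smallest_eig k A \<ge> 0"
    and "kth_smallest_eig k A > 0 \<Longrightarrow> \<exists>c \<in> carrier_vec (k - 1).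
           kth_smallest_eig k A * ((w - G *\<^sub>v c) \<bullet> (w - G *\<^sub>v c)) \<le> w \<bullet> (A *\<^sub>v w)"
proof -
  obtain W es where W: "W \<in> carrier_mat n n" and Wo: "W\<^sup>T * W = 1\<^sub>m n" and les: "length es = n"
    and ses: "sorted es" and AW: "A = W * diagm es * W\<^sup>T"
    using spectral[OF A sym] by blast
  have WWt: "W * W\<^sup>T = 1\<^sub>m n"
    using mat_mult_left_right_inverse[of "W\<^sup>T" n W] W Wo by auto
  have D: "diagm es \<in> carrier_mat n n" using les by auto
  have kth: "kth_smallest_eig k A = es ! (k - 1)"
    unfolding kth_smallest_eig_def char_poly_orth[OF W Wo les AW] proots_prod_lin
    using ses by (simp add: sorted_list_of_multiset_mset sorted_sort_id)
  define y where "y x = W\<^sup>T *\<^sub>v x" for x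
  have yc: "y x \<in> carrier_vec n" for x unfolding y_def carrier_vec_def using W by simp
  have Dv: "(diagm es *\<^sub>v u) $ l = es ! l * u $ l" if "u \<in> carrier_vec n" "l < n" for u l
  proof -
    have "(diagm es *\<^sub>v u) $ l = (\<Sum>t\<in>{0..<n}. (if l = t then es ! l else 0) * u $ t)"
      using that les by (auto simp: diagm_def scalar_prod_def intro!: sum.cong)
    also have "\<dots> = es ! l * u $ l" using that by (simp add: if_distrib[of "\<lambda>x. x * _"] sum.delta cong: if_cong)
    finally show ?thesis .
  qed
  have QA: "x \<bullet> (A *\<^sub>v x) = (\<Sum>l<n. es ! l * (y x $ l)\<^sup>2)" if x: "x \<in> carrier_vec n" for x
  proof -
    have "A *\<^sub>v x = W *\<^sub>v (diagm es *\<^sub>v (W\<^sup>T *\<^sub>v x))"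
      unfolding AW using W D x by (simp add: assoc_mult_mat_vec[of _ n n _ n])
    hence "x \<bullet> (A *\<^sub>v x) = (W\<^sup>T *\<^sub>v x) \<bullet> (diagm es *\<^sub>v (W\<^sup>T *\<^sub>v x))"
      using transpose_vec_mult_scalar[OF W, of "diagm es *\<^sub>v (W\<^sup>T *\<^sub>v x)" x] W D x by simp
    also have "\<dots> = (\<Sum>l<n. y x $ l * (diagm es *\<^sub>v y x) $ l)"
      unfolding y_def using W D les by (simp add: scalar_prod_def atLeast0LessThan)
    also have "\<dots> = (\<Sum>l<n. es ! l * (y x $ l)\<^sup>2)"
      using Dv[OF yc] by (auto simp: power2_eq_square intro!: sum.cong)
    finally show ?thesis .
  qed
  have QI: "x \<bullet> x = (\<Sum>l<n. (y x $ l)\<^sup>2)" if x: "x \<in> carrier_vec n" for x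
  proof -
    have "x = W *\<^sub>v (W\<^sup>T *\<^sub>v x)" using W x WWt
      by (metis assoc_mult_mat_vec one_mult_mat_vec transpose_carrier_mat)
    hence "x \<bullet> x = x \<bullet> (W *\<^sub>v (W\<^sup>T *\<^sub>v x))" by simp
    also have "\<dots> = (W\<^sup>T *\<^sub>v x) \<bullet> (W\<^sup>T *\<^sub>v x)"
      using transpose_vec_mult_scalar[OF W, of "W\<^sup>T *\<^sub>v x" x] W x by simp
    also have "\<dots> = (\<Sum>l<n. (y x $ l)\<^sup>2)" unfolding y_def using W
      by (auto simp: scalar_prod_def atLeast0LessThan power2_eq_square)
    finally show ?thesis .
  qed
  have esnn: "es ! l \<ge> 0" if l: "l < n" for l
  proof -
    define x where "x = W *\<^sub>v unit_vec n l"
    have x: "x \<in> carrier_vec n" unfolding x_def using W by simp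
    have "y x = unit_vec n l" unfolding y_def x_def using W Wo
      by (metis assoc_mult_mat_vec one_mult_mat_vec transpose_carrier_mat unit_vec_carrier)
    hence "x \<bullet> (A *\<^sub>v x) = (\<Sum>i<n. es ! i * (if i = l then 1 else 0))"
      unfolding QA[OF x] by (auto intro!: sum.cong simp: unit_vec_def)
    also have "\<dots> = es ! l" using l by (simp add: if_distrib[of "\<lambda>x. _ * x"] cong: if_cong)
    finally show ?thesis using psd[OF x] by simp
  qed
  show "kth_smallest_eig k A \<ge> 0" unfolding kth using esnn k by auto
  assume lpos: "kth_smallest_eig k A > 0"
  define lam where "lam = es ! (k - 1)"
  have lam: "lam > 0" using lpos kth lam_def by simp
  have esge: "es ! l \<ge> lam" if "k - 1 \<le> l" "l < n" for l
    unfolding lam_def using sorted_nth_mono[OF ses that(1)] that les by simp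
  have WtA: "W\<^sup>T * A = diagm es * W\<^sup>T"
  proof -
    have "W\<^sup>T * A = (W\<^sup>T * W) * diagm es * W\<^sup>T" unfolding AW using W D
      by (simp add: assoc_mult_mat[of _ n n _ n _ n])
    thus ?thesis using Wo D W by simp
  qed
  have kerc: "y (G *\<^sub>v c) $ l = 0" if c: "c \<in> carrier_vec (k - 1)" and l: "k - 1 \<le> l" "l < n" for c l
  proof -
    define z where "z = G *\<^sub>v c"
    have z: "z \<in> carrier_vec n" unfolding z_def using G c by simp
    have "W\<^sup>T *\<^sub>v (A *\<^sub>v z) = 0\<^sub>v n" using ker[OF c] W unfolding z_def by (auto intro!: eq_vecI simp: scalar_prod_def)
    moreover have "W\<^sup>T *\<^sub>v (A *\<^sub>v z) = diagm es *\<^sub>v (W\<^sup>T *\<^sub>v z)"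
      using W A D z by (metis WtA assoc_mult_mat_vec transpose_carrier_mat)
    ultimately have "(diagm es *\<^sub>v (W\<^sup>T *\<^sub>v z)) $ l = 0" using l by simp
    hence "es ! l * (y z $ l) = 0" using Dv[of "W\<^sup>T *\<^sub>v z" l] W z l unfolding y_def by simp
    thus ?thesis using esge[OF l] lam unfolding z_def by simp
  qed
  define M where "M = Matrix.mat (k - 1) (k - 1) (\<lambda>(l,t). (W\<^sup>T * G) $$ (l,t))"
  have Mc: "M \<in> carrier_mat (k - 1) (k - 1)" unfolding M_def by simp
  have Mv: "(M *\<^sub>v c) $ l = y (G *\<^sub>v c) $ l" if c: "c \<in> carrier_vec (k - 1)" and l: "l < k - 1" for c l
  proof -
    have "(M *\<^sub>v c) $ l = ((W\<^sup>T * G) *\<^sub>v c) $ l"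
      using c l W G k by (auto simp: M_def scalar_prod_def simp del: index_mult_mat(1) assoc_mult_mat_vec) (auto intro!: sum.cong simp: scalar_prod_def)
    also have "(W\<^sup>T * G) *\<^sub>v c = W\<^sup>T *\<^sub>v (G *\<^sub>v c)"
      by (rule assoc_mult_mat_vec) (use W G c in auto)
    also have "(W\<^sup>T *\<^sub>v (G *\<^sub>v c)) $ l = y (G *\<^sub>v c) $ l" unfolding y_def ..
    finally show ?thesis .
  qed
  have injM: "c = 0\<^sub>v (k - 1)" if c: "c \<in> carrier_vec (k - 1)" and Mc0: "M *\<^sub>v c = 0\<^sub>v (k - 1)" for c
  proof -
    define z where "z = G *\<^sub>v c"
    have z: "z \<in> carrier_vec n" unfolding z_def using G c by simp
    have yz: "y z = 0\<^sub>v n"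
    proof (rule eq_vecI)
      fix l assume "l < dim_vec (0\<^sub>v n :: real Matrix.vec)"
      hence l: "l < n" by simp
      show "y z $ l = 0\<^sub>v n $ l"
      proof (cases "l < k - 1")
        case True
        thus ?thesis using Mv[OF c True] Mc0 l unfolding z_def by (metis index_zero_vec(1))
      next
        case False thus ?thesis using kerc[OF c _ l] l unfolding z_def by simp
      qed
    qed (use yc in auto)
    have "z = W *\<^sub>v (W\<^sup>T *\<^sub>v z)" using W z WWt
      by (metis assoc_mult_mat_vec one_mult_mat_vec transpose_carrier_mat)
    also have "\<dots> = 0\<^sub>v n" using yz W unfolding y_def by simp
    finally show ?thesis using injG[OF c] unfolding z_def by simp
  qed
  define t where "t = Matrix.vec (k - 1) (\<lambda>l. y w $ l)"
  obtain c where c: "c \<in> carrier_vec (k - 1)" and Mct: "M *\<^sub>v c = t"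
    using inj_imp_surj_mat[OF Mc injM, of t] unfolding t_def by auto
  define z where "z = G *\<^sub>v c"
  have z: "z \<in> carrier_vec n" unfolding z_def using G c by simp
  define w' where "w' = w - z"
  have w': "w' \<in> carrier_vec n" unfolding w'_def using w z by simp
  have yw': "y w' $ l = y w $ l - y z $ l" if "l < n" for l
    unfolding y_def w'_def using W w z that by (simp add: mult_minus_distrib_mat_vec)
  have y0: "y w' $ l = 0" if "l < k - 1" for l
    using yw'[of l] Mv[OF c that] Mct that k unfolding t_def z_def by simp
  have Aw': "A *\<^sub>v w' = A *\<^sub>v w" unfolding w'_def z_def
    using A w z ker[OF c] unfolding z_def by (simp add: mult_minus_distrib_mat_vec)
  have "w' \<bullet> (A *\<^sub>v w') = w \<bullet> (A *\<^sub>v w) - z \<bullet> (A *\<^sub>v w)"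
    unfolding Aw' unfolding w'_def using w z A by (simp add: minus_scalar_prod_distrib)
  also have "z \<bullet> (A *\<^sub>v w) = 0"
    using transpose_vec_mult_scalar[OF A w z] sym ker[OF c] w unfolding z_def by simp
  finally have eq: "w' \<bullet> (A *\<^sub>v w') = w \<bullet> (A *\<^sub>v w)" by simp
  have "lam * (w' \<bullet> w') = (\<Sum>l<n. lam * (y w' $ l)\<^sup>2)" unfolding QI[OF w'] by (simp add: sum_distrib_left)
  also have "\<dots> \<le> (\<Sum>l<n. es ! l * (y w' $ l)\<^sup>2)"
  proof (rule sum_mono)
    fix l assume "l \<in> {..<n}"
    thus "lam * (y w' $ l)\<^sup>2 \<le> es ! l * (y w' $ l)\<^sup>2"
      using y0[of l] esge[of l] by (cases "l < k - 1") (auto intro: mult_right_mono)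
  qed
  also have "\<dots> = w \<bullet> (A *\<^sub>v w)" using QA[OF w'] eq by simp
  finally show "\<exists>c \<in> carrier_vec (k - 1).
           kth_smallest_eig k A * ((w - G *\<^sub>v c) \<bullet> (w - G *\<^sub>v c)) \<le> w \<bullet> (A *\<^sub>v w)"
    using c kth unfolding lam_def w'_def z_def by (intro bexI[of _ c]) auto
qed


definition offs :: "(nat \<Rightarrow> nat) \<Rightarrow> nat \<Rightarrow> nat" where "offs r i = (\<Sum>j<i. r j)"

lemma offs_Suc: "offs r (Suc i) = offs r i + r i" unfolding offs_def by simp

lemma offs_mono: "i \<le> j \<Longrightarrow> offs r i \<le> offs r j"
  unfolding offs_def by (rule sum_mono2) auto

lemma offs_lt: "i < k \<Longrightarrow> a < r i \<Longrightarrow> offs r i + a < offs r k"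
  using offs_mono[of "Suc i" k r] offs_Suc[of r i] by simp

lemma blk_off: assumes "a < r i" shows "blk r (offs r i + a) = i"
  unfolding blk_def
proof (rule Least_equality)
  show "offs r i + a < (\<Sum>j<Suc i. r j)" using assms offs_Suc[of r i] unfolding offs_def by simp
  fix y assume y: "offs r i + a < (\<Sum>j<Suc y. r j)"
  show "i \<le> y"
  proof (rule ccontr)
    assume "\<not> i \<le> y"
    hence "offs r (Suc y) \<le> offs r i" by (intro offs_mono) simp
    thus False using y unfolding offs_def by simp
  qed
qed

lemma pos_off: assumes "a < r i" shows "pos r (offs r i + a) = a"
  unfolding pos_def blk_off[of a r i, OF assms] offs_def[symmetric] by simp

lemma sum_split_add: "(\<Sum>p<(x::nat) + y. g p) = (\<Sum>p<x. g p) + (\<Sum>a<y. g (x + a))"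
  by (induct y arbitrary: g) (auto simp: add.assoc)

lemma sum_blocks: "(\<Sum>p<offs r k. g p) = (\<Sum>i<k. \<Sum>a<r i. g (offs r i + a))"
  by (induct k) (auto simp: offs_Suc sum_split_add offs_def)

lemma idx_exists: "p < offs r k \<Longrightarrow> \<exists>i a. i < k \<and> a < r i \<and> p = offs r i + a"
proof (induct k)
  case (Suc k)
  show ?case
  proof (cases "p < offs r k")
    case True thus ?thesis using Suc by (meson less_SucI)
  next
    case False thus ?thesis using Suc(2) unfolding offs_Suc
      by (intro exI[of _ k] exI[of _ "p - offs r k"]) auto
  qed
qed (simp add: offs_def)

lemma blk_lt: "p < offs r k \<Longrightarrow> blk r p < k \<and> pos r p < r (blk r p) \<and> p = offs r (blk r p) + pos r p"
  using idx_exists[of p r k] blk_off pos_off by force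

lemma S_fin: "finite (sample_space k r)"
  unfolding sample_space_def by (rule finite_PiE) auto

lemma S_mem: "x \<in> sample_space k r \<Longrightarrow> i < k \<Longrightarrow> x i < r i"
  unfolding sample_space_def by (auto simp: PiE_def Pi_def)

lemma E_sum: assumes "set_pmf R \<subseteq> sample_space k r"
  shows "measure_pmf.expectation R h = (\<Sum>x\<in>sample_space k r. h x * pmf R x)"
  by (rule integral_measure_pmf_real[OF S_fin]) (use assms in auto)

lemma prob_sum: assumes RS: "set_pmf R \<subseteq> sample_space k r"
  shows "measure_pmf.prob R A = (\<Sum>x\<in>sample_space k r. (if x \<in> A then 1 else 0) * pmf R x)"
proof -
  let ?S = "sample_space k r"
  have "measure_pmf.prob R A = measure_pmf.prob R (A \<inter> set_pmf R)" by (simp add: measure_Int_set_pmf)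
  also have "A \<inter> set_pmf R = (A \<inter> ?S) \<inter> set_pmf R" using RS by auto
  also have "measure_pmf.prob R \<dots> = measure_pmf.prob R (A \<inter> ?S)" by (simp add: measure_Int_set_pmf)
  also have "\<dots> = sum (pmf R) (A \<inter> ?S)" by (rule measure_measure_pmf_finite) (use S_fin in auto)
  also have "\<dots> = (\<Sum>x\<in>?S. (if x \<in> A then 1 else 0) * pmf R x)"
    using S_fin[of k r] by (simp add: sum.inter_restrict[symmetric] Int_commute if_distrib[of "\<lambda>x. x * _"] cong: if_cong)
  finally show ?thesis .
qed

lemma marg_sum: "set_pmf R \<subseteq> sample_space k r \<Longrightarrow>
  marg R i a = (\<Sum>x\<in>sample_space k r. (if x i = a then 1 else 0) * pmf R x)"
  unfolding marg_def by (subst prob_sum) auto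

lemma marg2_sum: "set_pmf R \<subseteq> sample_space k r \<Longrightarrow>
  marg2 R i a j b = (\<Sum>x\<in>sample_space k r. (if x i = a \<and> x j = b then 1 else 0) * pmf R x)"
  unfolding marg2_def by (subst prob_sum) auto

lemma marg2_same: "marg2 R i a i b = (if a = b then marg R i a else 0)"
proof (cases "a = b")
  case False
  hence e: "{x. x i = a \<and> x i = b} = {}" by auto
  show ?thesis using False unfolding marg2_def e by simp
qed (simp add: marg2_def marg_def)

lemma marg2_sym: "marg2 R i a j b = marg2 R j b i a"
  unfolding marg2_def by (simp add: conj_commute)

lemma marg2_sum_b: assumes RS: "set_pmf R \<subseteq> sample_space k r" and j: "j < k"
  shows "(\<Sum>b<r j. marg2 R i a j b) = marg R i a"
proof -
  have "(\<Sum>b<r j. marg2 R i a j b) =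
     (\<Sum>x\<in>sample_space k r. (\<Sum>b<r j. (if x i = a \<and> x j = b then 1 else 0)) * pmf R x)"
    unfolding marg2_sum[OF RS] by (subst sum.swap) (simp add: sum_distrib_right)
  also have "\<dots> = (\<Sum>x\<in>sample_space k r. (if x i = a then 1 else 0) * pmf R x)"
  proof (rule sum.cong[OF refl])
    fix x assume x: "x \<in> sample_space k r"
    have "(\<Sum>b<r j. (if x i = a \<and> x j = b then 1 else 0)) = (\<Sum>b<r j. if b = x j then (if x i = a then 1 else 0) else (0::real))"
      by (rule sum.cong) auto
    also have "\<dots> = (if x i = a then 1 else 0)" using S_mem[OF x j] by (simp add: sum.delta)
    finally show "(\<Sum>b<r j. (if x i = a \<and> x j = b then 1 else 0)) * pmf R x = (if x i = a then 1 else 0) * pmf R x"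
      by simp
  qed
  finally show ?thesis using marg_sum[OF RS] by simp
qed

lemma nonempty_r: assumes RS: "set_pmf R \<subseteq> sample_space k r" and i: "i < k" shows "r i > 0"
proof -
  obtain x where "x \<in> set_pmf R" using set_pmf_not_empty[of R] by blast
  hence "x \<in> sample_space k r" using RS by auto
  from S_mem[OF this i] show ?thesis by simp
qed

lemma K_carrier: "Kmat k r R \<in> carrier_mat (offs r k) (offs r k)"
  unfolding Kmat_def offs_def by simp

lemma K_entry: assumes "p < offs r k" "q < offs r k"
  shows "Kmat k r R $$ (p,q) = marg2 R (blk r p) (pos r p) (blk r q) (pos r q)"
  using assms unfolding Kmat_def offs_def[symmetric] by (simp add: Let_def marg2_same)

lemma K_entry_off: assumes "i < k" "a < r i" "j < k" "b < r j"
  shows "Kmat k r R $$ (offs r i + a, offs r j + b) = marg2 R i a j b"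
  using K_entry[OF offs_lt[of i k a r, OF assms(1,2)] offs_lt[of j k b r, OF assms(3,4)]] blk_off pos_off assms by simp

lemma single_E: assumes RS: "set_pmf R \<subseteq> sample_space k r" and i: "i < k"
  shows "(\<Sum>x\<in>sample_space k r. f (x i) * pmf R x) = (\<Sum>a<r i. f a * marg R i a)"
proof -
  have "(\<Sum>a<r i. f a * marg R i a) = (\<Sum>a<r i. \<Sum>x\<in>sample_space k r. (if x i = a then f a else 0) * pmf R x)"
    unfolding marg_sum[OF RS] by (auto simp: sum_distrib_left intro!: sum.cong)
  also have "\<dots> = (\<Sum>x\<in>sample_space k r. \<Sum>a<r i. (if a = x i then f (x i) * pmf R x else 0))"
    by (subst sum.swap) (auto intro!: sum.cong)
  also have "\<dots> = (\<Sum>x\<in>sample_space k r. f (x i) * pmf R x)"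
    by (rule sum.cong[OF refl]) (use S_mem[OF _ i] in \<open>simp add: sum.delta\<close>)
  finally show ?thesis by simp
qed

lemma pair_E: assumes RS: "set_pmf R \<subseteq> sample_space k r" and i: "i < k" and j: "j < k"
  shows "(\<Sum>x\<in>sample_space k r. f (x i) (x j) * pmf R x) = (\<Sum>a<r i. \<Sum>b<r j. f a b * marg2 R i a j b)"
proof -
  have "(\<Sum>a<r i. \<Sum>b<r j. f a b * marg2 R i a j b) =
     (\<Sum>a<r i. \<Sum>b<r j. \<Sum>x\<in>sample_space k r. (if x i = a \<and> x j = b then f a b else 0) * pmf R x)"
    unfolding marg2_sum[OF RS] by (auto simp: sum_distrib_left intro!: sum.cong)
  also have "\<dots> = (\<Sum>a<r i. \<Sum>x\<in>sample_space k r. \<Sum>b<r j. (if x i = a \<and> x j = b then f a b else 0) * pmf R x)"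
    by (rule sum.cong[OF refl], rule sum.swap)
  also have "\<dots> = (\<Sum>x\<in>sample_space k r. \<Sum>a<r i. \<Sum>b<r j. (if x i = a \<and> x j = b then f a b else 0) * pmf R x)"
    by (rule sum.swap)
  also have "\<dots> = (\<Sum>x\<in>sample_space k r. f (x i) (x j) * pmf R x)"
  proof (rule sum.cong[OF refl])
    fix x assume x: "x \<in> sample_space k r"
    have e: "(if x i = a \<and> x j = b then f a b else 0) * pmf R x = 
       (if a = x i then (if b = x j then f (x i) (x j) * pmf R x else 0) else 0)" for a b by auto
    have "(\<Sum>a<r i. \<Sum>b<r j. (if x i = a \<and> x j = b then f a b else 0) * pmf R x)
        = (\<Sum>a<r i. if a = x i then (\<Sum>b<r j. if b = x j then f (x i) (x j) * pmf R x else 0) else 0)"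
      unfolding e by (rule sum.cong[OF refl]) simp
    also have "\<dots> = f (x i) (x j) * pmf R x" using S_mem[OF x i] S_mem[OF x j] by (simp add: sum.delta)
    finally show "(\<Sum>a<r i. \<Sum>b<r j. (if x i = a \<and> x j = b then f a b else 0) * pmf R x) = f (x i) (x j) * pmf R x" .
  qed
  finally show ?thesis by simp
qed

lemma swap3: "(\<Sum>x\<in>S. (\<Sum>i\<in>I. \<Sum>j\<in>J. g x i j) * (p x::real)) = (\<Sum>i\<in>I. \<Sum>j\<in>J. \<Sum>x\<in>S. g x i j * p x)"
proof -
  have "(\<Sum>x\<in>S. (\<Sum>i\<in>I. \<Sum>j\<in>J. g x i j) * p x) = (\<Sum>x\<in>S. \<Sum>i\<in>I. \<Sum>j\<in>J. g x i j * p x)"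
    by (simp add: sum_distrib_right)
  also have "\<dots> = (\<Sum>i\<in>I. \<Sum>x\<in>S. \<Sum>j\<in>J. g x i j * p x)" by (rule sum.swap)
  also have "\<dots> = (\<Sum>i\<in>I. \<Sum>j\<in>J. \<Sum>x\<in>S. g x i j * p x)" by (rule sum.cong[OF refl], rule sum.swap)
  finally show ?thesis .
qed

definition Fv :: "(nat \<Rightarrow> nat) \<Rightarrow> nat \<Rightarrow> real Matrix.vec \<Rightarrow> (nat \<Rightarrow> nat) \<Rightarrow> real" where
  "Fv r k v x = (\<Sum>i<k. v $ (offs r i + x i))"

lemma QF: assumes RS: "set_pmf R \<subseteq> sample_space k r" and v: "v \<in> carrier_vec (offs r k)"
  shows "v \<bullet> (Kmat k r R *\<^sub>v v) = measure_pmf.expectation R (\<lambda>x. (Fv r k v x)\<^sup>2)"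
proof -
  let ?N = "offs r k"
  let ?vv = "\<lambda>i a. v $ (offs r i + a)"
  have Kv: "(Kmat k r R *\<^sub>v v) $ p = (\<Sum>q<?N. Kmat k r R $$ (p,q) * v $ q)" if "p < ?N" for p
    using that v K_carrier[of k r R] by (auto simp: scalar_prod_def atLeast0LessThan)
  have "v \<bullet> (Kmat k r R *\<^sub>v v) = (\<Sum>p<?N. v $ p * (\<Sum>q<?N. Kmat k r R $$ (p,q) * v $ q))"
    using K_carrier[of k r R] Kv by (auto simp: scalar_prod_def atLeast0LessThan intro!: sum.cong)
  also have "\<dots> = (\<Sum>i<k. \<Sum>a<r i. \<Sum>j<k. \<Sum>b<r j. ?vv i a * ?vv j b * marg2 R i a j b)"
    unfolding sum_blocks
    by (auto intro!: sum.cong simp: K_entry_off sum_distrib_left mult.assoc mult.left_commute)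
  also have "\<dots> = (\<Sum>i<k. \<Sum>j<k. \<Sum>a<r i. \<Sum>b<r j. ?vv i a * ?vv j b * marg2 R i a j b)"
    by (rule sum.cong[OF refl], rule sum.swap)
  also have "\<dots> = (\<Sum>i<k. \<Sum>j<k. \<Sum>x\<in>sample_space k r. ?vv i (x i) * ?vv j (x j) * pmf R x)"
    by (intro sum.cong refl, subst pair_E[OF RS]) auto
  also have "\<dots> = (\<Sum>x\<in>sample_space k r. (Fv r k v x)\<^sup>2 * pmf R x)"
    unfolding Fv_def power2_eq_square sum_product swap3 by simp
  also have "\<dots> = measure_pmf.expectation R (\<lambda>x. (Fv r k v x)\<^sup>2)" by (rule E_sum[OF RS, symmetric])
  finally show ?thesis .
qed


lemma diag_sandwich:
  fixes K :: "real mat"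
  assumes K: "K \<in> carrier_mat n n" and p: "p < n" and q: "q < n"
  shows "(Matrix.mat n n (\<lambda>(p,q). if p = q then d p else 0) * K * Matrix.mat n n (\<lambda>(p,q). if p = q then d p else 0)) $$ (p,q)
     = d p * K $$ (p,q) * d q"
proof -
  let ?D = "Matrix.mat n n (\<lambda>(p,q). if p = q then d p else 0)"
  have DK: "(?D * K) $$ (p,t) = d p * K $$ (p,t)" if "t < n" for t
  proof -
    have "(?D * K) $$ (p,t) = (\<Sum>s\<in>{0..<n}. (if p = s then d p else 0) * K $$ (s,t))"
      using K p that by (auto simp: scalar_prod_def intro!: sum.cong)
    also have "\<dots> = d p * K $$ (p,t)" using p by (simp add: if_distrib[of "\<lambda>x. x * _"] sum.delta cong: if_cong)
    finally show ?thesis .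
  qed
  have "(?D * K * ?D) $$ (p,q) = (\<Sum>s\<in>{0..<n}. (?D * K) $$ (p,s) * (if s = q then d q else 0))"
    using K p q by (auto simp: scalar_prod_def intro!: sum.cong)
  also have "\<dots> = (?D * K) $$ (p,q) * d q" using q by (simp add: if_distrib[of "\<lambda>x. _ * x"] sum.delta cong: if_cong)
  finally show ?thesis using DK[OF q] by simp
qed

lemma mv_entry: "A \<in> carrier_mat n m \<Longrightarrow> x \<in> carrier_vec m \<Longrightarrow> p < n \<Longrightarrow>
   (A *\<^sub>v x) $ p = (\<Sum>q<m. A $$ (p,q) * x $ q)"
  by (auto simp: scalar_prod_def atLeast0LessThan)

lemma self_sprod: "(x :: real Matrix.vec) \<in> carrier_vec n \<Longrightarrow> x \<bullet> x = (\<Sum>p<n. (x $ p)\<^sup>2)"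
  unfolding scalar_prod_def by (auto simp: atLeast0LessThan power2_eq_square)

context
  fixes k :: nat and r :: "nat \<Rightarrow> nat" and P Q :: "(nat \<Rightarrow> nat) pmf"
  assumes k2: "k \<ge> 2" and PS: "set_pmf P \<subseteq> sample_space k r" and QS: "set_pmf Q \<subseteq> sample_space k r"
    and mpos: "\<And>i t. i < k \<Longrightarrow> t < r i \<Longrightarrow> marg P i t > 0"
begin

lemma Kpp: "p < offs r k \<Longrightarrow> Kmat k r P $$ (p,p) = marg P (blk r p) (pos r p)"
  using K_entry[of p r k p P] by (simp add: marg2_same)

lemma mposp: "p < offs r k \<Longrightarrow> marg P (blk r p) (pos r p) > 0"
  using blk_lt[of p r k] mpos by auto

definition sP where "sP p = sqrt (marg P (blk r p) (pos r p))"

lemma sP_pos: "p < offs r k \<Longrightarrow> sP p > 0"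
  unfolding sP_def using mposp by simp

lemma A_carrier: "normalize_mat (Kmat k r P) \<in> carrier_mat (offs r k) (offs r k)"
  unfolding normalize_mat_def Let_def using K_carrier[of k r P] by auto

lemma A_entry: assumes p: "p < offs r k" and q: "q < offs r k"
  shows "normalize_mat (Kmat k r P) $$ (p,q) = Kmat k r P $$ (p,q) / (sP p * sP q)"
proof -
  have dr: "dim_row (Kmat k r P) = offs r k" using K_carrier[of k r P] by auto
  have "normalize_mat (Kmat k r P) $$ (p,q) = 1 / sqrt (Kmat k r P $$ (p,p)) * Kmat k r P $$ (p,q) * (1 / sqrt (Kmat k r P $$ (q,q)))"
    unfolding normalize_mat_def Let_def dr
    by (rule diag_sandwich[OF K_carrier p q, of "\<lambda>p. 1 / sqrt (Kmat k r P $$ (p,p))"])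
  thus ?thesis unfolding Kpp[OF p] Kpp[OF q] sP_def by simp
qed

lemma K_sym: "p < offs r k \<Longrightarrow> q < offs r k \<Longrightarrow> Kmat k r R $$ (p,q) = Kmat k r R $$ (q,p)"
  using K_entry marg2_sym by metis

lemma A_sym: "(normalize_mat (Kmat k r P))\<^sup>T = normalize_mat (Kmat k r P)"
  by (rule eq_matI) (use A_carrier in \<open>auto simp: A_entry K_sym mult.commute\<close>)

lemma wAw: assumes v: "v \<in> carrier_vec (offs r k)"
  shows "(Matrix.vec (offs r k) (\<lambda>p. sP p * v $ p)) \<bullet> (normalize_mat (Kmat k r P) *\<^sub>v Matrix.vec (offs r k) (\<lambda>p. sP p * v $ p))
     = v \<bullet> (Kmat k r P *\<^sub>v v)"
proof -
  let ?N = "offs r k"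
  let ?A = "normalize_mat (Kmat k r P)"
  let ?K = "Kmat k r P"
  let ?w = "Matrix.vec ?N (\<lambda>p. sP p * v $ p)"
  have Aw: "(?A *\<^sub>v ?w) $ p = (\<Sum>q<?N. ?A $$ (p,q) * (sP q * v $ q))" if "p < ?N" for p
    using that A_carrier by (auto simp: scalar_prod_def atLeast0LessThan)
  have Kv: "(?K *\<^sub>v v) $ p = (\<Sum>q<?N. ?K $$ (p,q) * v $ q)" if "p < ?N" for p
    using that K_carrier[of k r P] v by (auto simp: scalar_prod_def atLeast0LessThan)
  have "?w \<bullet> (?A *\<^sub>v ?w) = (\<Sum>p<?N. sP p * v $ p * (\<Sum>q<?N. ?A $$ (p,q) * (sP q * v $ q)))"
    using A_carrier Aw by (auto simp: scalar_prod_def atLeast0LessThan intro!: sum.cong)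
  also have "\<dots> = (\<Sum>p<?N. v $ p * (\<Sum>q<?N. ?K $$ (p,q) * v $ q))"
  proof (rule sum.cong[OF refl])
    fix p assume p: "p \<in> {..<?N}"
    have "sP p * v $ p * (\<Sum>q<?N. ?A $$ (p,q) * (sP q * v $ q)) = v $ p * (\<Sum>q<?N. sP p * (?A $$ (p,q) * (sP q * v $ q)))"
      by (simp add: sum_distrib_left mult_ac)
    also have "(\<Sum>q<?N. sP p * (?A $$ (p,q) * (sP q * v $ q))) = (\<Sum>q<?N. ?K $$ (p,q) * v $ q)"
    proof (rule sum.cong[OF refl])
      fix q assume q: "q \<in> {..<?N}"
      show "sP p * (?A $$ (p,q) * (sP q * v $ q)) = ?K $$ (p,q) * v $ q"
        using sP_pos[of p] sP_pos[of q] p q by (simp add: A_entry field_simps)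
    qed
    finally show "sP p * v $ p * (\<Sum>q<?N. ?A $$ (p,q) * (sP q * v $ q)) = v $ p * (\<Sum>q<?N. ?K $$ (p,q) * v $ q)" .
  qed
  also have "\<dots> = v \<bullet> (?K *\<^sub>v v)"
    using K_carrier[of k r P] Kv by (auto simp: scalar_prod_def atLeast0LessThan intro!: sum.cong)
  finally show ?thesis .
qed

lemma qf_nonneg: assumes RS: "set_pmf R \<subseteq> sample_space k r" and v: "v \<in> carrier_vec (offs r k)"
  shows "v \<bullet> (Kmat k r R *\<^sub>v v) \<ge> 0"
  unfolding QF[OF RS v] by (rule integral_nonneg_AE) auto

lemma psd: assumes x: "x \<in> carrier_vec (offs r k)"
  shows "x \<bullet> (normalize_mat (Kmat k r P) *\<^sub>v x) \<ge> 0"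
proof -
  define v where "v = Matrix.vec (offs r k) (\<lambda>p. x $ p / sP p)"
  have v: "v \<in> carrier_vec (offs r k)" unfolding v_def by simp
  have "Matrix.vec (offs r k) (\<lambda>p. sP p * v $ p) = x"
    using x sP_pos unfolding v_def by (intro eq_vecI) (auto, metis less_irrefl)
  with wAw[OF v] qf_nonneg[OF PS v] show ?thesis by simp
qed

lemma r_pos: "i < k \<Longrightarrow> r i > 0"
  using nonempty_r[OF PS] by blast

lemma k_le_N: "k \<le> offs r k"
proof -
  have "(\<Sum>i<k. (1::nat)) \<le> (\<Sum>i<k. r i)" by (rule sum_mono) (use r_pos in \<open>auto simp: Suc_le_eq\<close>)
  thus ?thesis unfolding offs_def by simp
qed

definition Gm where "Gm = Matrix.mat (offs r k) (k - 1)
  (\<lambda>(p,t). sP p * ((if blk r p = t then 1 else 0) - (if blk r p = k - 1 then 1 else 0)))"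

definition cc :: "real Matrix.vec \<Rightarrow> nat \<Rightarrow> real" where
  "cc c i = (if i < k - 1 then c $ i else - (\<Sum>t<k - 1. c $ t))"

lemma Gm_carrier: "Gm \<in> carrier_mat (offs r k) (k - 1)" unfolding Gm_def by simp

lemma Gv: assumes c: "c \<in> carrier_vec (k - 1)" and p: "p < offs r k"
  shows "(Gm *\<^sub>v c) $ p = sP p * cc c (blk r p)"
proof -
  have b: "blk r p < k" using blk_lt[OF p] by simp
  have "(Gm *\<^sub>v c) $ p = (\<Sum>t<k - 1. sP p * ((if blk r p = t then 1 else 0) - (if blk r p = k - 1 then 1 else 0)) * c $ t)"
    using c p by (auto simp: Gm_def scalar_prod_def atLeast0LessThan)
  also have "\<dots> = sP p * cc c (blk r p)"
  proof (cases "blk r p < k - 1")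
    case True
    hence "(\<Sum>t<k - 1. sP p * ((if blk r p = t then 1 else 0) - (if blk r p = k - 1 then 1 else 0)) * c $ t)
       = (\<Sum>t<k - 1. if t = blk r p then sP p * c $ t else 0)" by (intro sum.cong) auto
    thus ?thesis using True by (simp add: cc_def)
  next
    case False
    hence bk: "blk r p = k - 1" using b by auto
    hence "(\<Sum>t<k - 1. sP p * ((if blk r p = t then 1 else 0) - (if blk r p = k - 1 then 1 else 0)) * c $ t)
       = (\<Sum>t<k - 1. - (sP p * c $ t))" by (intro sum.cong) auto
    thus ?thesis using bk by (simp add: cc_def sum_negf sum_distrib_left)
  qed
  finally show ?thesis .
qed

lemma cc_sum: "(\<Sum>i<k. cc c i) = 0"
proof -
  have k: "k = Suc (k - 1)" using k2 by simp
  have "(\<Sum>i<k. cc c i) = (\<Sum>i<k - 1. cc c i) + cc c (k - 1)"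
    by (subst k, subst sum.lessThan_Suc) simp
  also have "\<dots> = 0" unfolding cc_def by simp
  finally show ?thesis .
qed

lemma ker: assumes c: "c \<in> carrier_vec (k - 1)"
  shows "normalize_mat (Kmat k r P) *\<^sub>v (Gm *\<^sub>v c) = 0\<^sub>v (offs r k)"
proof (rule eq_vecI)
  let ?N = "offs r k"
  let ?A = "normalize_mat (Kmat k r P)"
  fix p assume "p < dim_vec (0\<^sub>v ?N :: real Matrix.vec)"
  hence p: "p < ?N" by simp
  obtain i a where ia: "i < k" "a < r i" "p = offs r i + a" using idx_exists[OF p] by blast
  have Gc: "Gm *\<^sub>v c \<in> carrier_vec ?N" using Gm_carrier c by simp
  have "(?A *\<^sub>v (Gm *\<^sub>v c)) $ p = (\<Sum>q<?N. ?A $$ (p,q) * (Gm *\<^sub>v c) $ q)"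
    by (rule mv_entry[OF A_carrier Gc p])
  also have "\<dots> = (\<Sum>q<?N. Kmat k r P $$ (p,q) * cc c (blk r q) / sP p)"
  proof (rule sum.cong[OF refl])
    fix q assume "q \<in> {..<?N}"
    hence q: "q < ?N" by simp
    show "?A $$ (p,q) * (Gm *\<^sub>v c) $ q = Kmat k r P $$ (p,q) * cc c (blk r q) / sP p"
      using sP_pos[OF p] sP_pos[OF q] by (simp add: Gv[OF c q] A_entry[OF p q] field_simps)
  qed
  also have "\<dots> = (\<Sum>j<k. \<Sum>b<r j. marg2 P i a j b * cc c j / sP p)"
    unfolding sum_blocks by (intro sum.cong refl) (use ia in \<open>simp add: K_entry_off blk_off\<close>)
  also have "\<dots> = (\<Sum>j<k. marg P i a * cc c j / sP p)"
    by (intro sum.cong refl) (simp add: sum_divide_distrib[symmetric] sum_distrib_right[symmetric] marg2_sum_b[OF PS])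
  also have "\<dots> = marg P i a / sP p * (\<Sum>j<k. cc c j)" by (simp add: sum_distrib_left)
  also have "\<dots> = 0" by (simp add: cc_sum)
  finally show "(?A *\<^sub>v (Gm *\<^sub>v c)) $ p = 0\<^sub>v ?N $ p" using p by simp
qed (use A_carrier in simp)

lemma injG: assumes c: "c \<in> carrier_vec (k - 1)" and G0: "Gm *\<^sub>v c = 0\<^sub>v (offs r k)"
  shows "c = 0\<^sub>v (k - 1)"
proof (rule eq_vecI)
  fix t assume "t < dim_vec (0\<^sub>v (k - 1) :: real Matrix.vec)"
  hence t: "t < k - 1" by simp
  hence tk: "t < k" by simp
  define p where "p = offs r t + 0"
  have p: "p < offs r k" unfolding p_def by (rule offs_lt[of t k 0 r, OF tk r_pos[OF tk]])
  have bp: "blk r p = t" unfolding p_def by (rule blk_off[of 0 r t, OF r_pos[OF tk]])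
  have "0 = (Gm *\<^sub>v c) $ p" using G0 p by simp
  also have "\<dots> = sP p * c $ t" using Gv[OF c p] bp t by (simp add: cc_def)
  finally show "c $ t = 0\<^sub>v (k - 1) $ t" using sP_pos[OF p] t by simp
qed (use c in simp)

lemma Mx_ge: assumes "i < k" "a < r i"
  shows "marg Q i a \<le> (MAX (i, t) \<in> Sigma {..<k} (\<lambda>i. {..<r i}). marg Q i t / marg P i t) * marg P i a"
proof -
  have "marg Q i a / marg P i a \<le> (MAX (i, t) \<in> Sigma {..<k} (\<lambda>i. {..<r i}). marg Q i t / marg P i t)"
    by (rule Max_ge) (use assms in \<open>auto intro!: finite_SigmaI\<close>)
  thus ?thesis using mpos[OF assms] by (simp add: divide_le_eq)
qed

lemma Mx_nonneg: "(MAX (i, t) \<in> Sigma {..<k} (\<lambda>i. {..<r i}). marg Q i t / marg P i t) \<ge> 0"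
proof -
  have k0: "0 < k" using k2 by simp
  have "marg Q 0 0 \<ge> 0" unfolding marg_def by simp
  hence "0 \<le> marg Q 0 0 / marg P 0 0" using mpos[OF k0 r_pos[OF k0]] by simp
  also have "\<dots> \<le> (MAX (i, t) \<in> Sigma {..<k} (\<lambda>i. {..<r i}). marg Q i t / marg P i t)"
    by (rule Max_ge) (use k0 r_pos[OF k0] in \<open>auto intro!: finite_SigmaI\<close>)
  finally show ?thesis .
qed

lemma bound_v:
  assumes lam: "kth_smallest_eig k (normalize_mat (Kmat k r P)) > 0" and v: "v \<in> carrier_vec (offs r k)"
  shows "v \<bullet> (Kmat k r Q *\<^sub>v v) \<le> real k / kth_smallest_eig k (normalize_mat (Kmat k r P))
     * (MAX (i, t) \<in> Sigma {..<k} (\<lambda>i. {..<r i}). marg Q i t / marg P i t) * (v \<bullet> (Kmat k r P *\<^sub>v v))"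
proof -
  let ?N = "offs r k"
  let ?A = "normalize_mat (Kmat k r P)"
  let ?l = "kth_smallest_eig k ?A"
  let ?M = "(MAX (i, t) \<in> Sigma {..<k} (\<lambda>i. {..<r i}). marg Q i t / marg P i t)"
  define w where "w = Matrix.vec ?N (\<lambda>p. sP p * v $ p)"
  have w: "w \<in> carrier_vec ?N" unfolding w_def by simp
  have k1: "1 \<le> k" using k2 by simp
  obtain c where c: "c \<in> carrier_vec (k - 1)"
    and lc: "?l * ((w - Gm *\<^sub>v c) \<bullet> (w - Gm *\<^sub>v c)) \<le> w \<bullet> (?A *\<^sub>v w)"
    using core(2)[OF A_carrier A_sym psd Gm_carrier ker injG k1 k_le_N w lam] by blast
  define u where "u i a = v $ (offs r i + a) - cc c i" for i a
  define SP where "SP = (\<Sum>i<k. \<Sum>a<r i. marg P i a * (u i a)\<^sup>2)"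
  have Gc: "Gm *\<^sub>v c \<in> carrier_vec ?N" using Gm_carrier c by simp
  have "(w - Gm *\<^sub>v c) \<bullet> (w - Gm *\<^sub>v c) = (\<Sum>p<?N. ((w - Gm *\<^sub>v c) $ p)\<^sup>2)"
    by (rule self_sprod) (use w Gc in simp)
  also have "\<dots> = (\<Sum>p<?N. marg P (blk r p) (pos r p) * (v $ p - cc c (blk r p))\<^sup>2)"
  proof (rule sum.cong[OF refl])
    fix p assume "p \<in> {..<?N}"
    hence p: "p < ?N" by simp
    have "(w - Gm *\<^sub>v c) $ p = sP p * (v $ p - cc c (blk r p))"
      using p Gc Gm_carrier by (subst index_minus_vec) (auto simp: w_def Gv[OF c p] algebra_simps carrier_vecD[OF Gc])
    thus "((w - Gm *\<^sub>v c) $ p)\<^sup>2 = marg P (blk r p) (pos r p) * (v $ p - cc c (blk r p))\<^sup>2"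
      using mposp[OF p] by (simp add: power_mult_distrib sP_def)
  qed
  also have "\<dots> = SP" unfolding sum_blocks SP_def u_def by (intro sum.cong refl) (simp add: blk_off pos_off)
  finally have wG: "(w - Gm *\<^sub>v c) \<bullet> (w - Gm *\<^sub>v c) = SP" .
  have qP: "w \<bullet> (?A *\<^sub>v w) = v \<bullet> (Kmat k r P *\<^sub>v v)" unfolding w_def by (rule wAw[OF v])
  have SPle: "SP \<le> (v \<bullet> (Kmat k r P *\<^sub>v v)) / ?l"
    using lc lam unfolding wG qP by (simp add: field_simps)
  have Fveq: "Fv r k v x = (\<Sum>i<k. u i (x i))" for x
    unfolding Fv_def u_def sum_subtractf cc_sum by simp
  have "v \<bullet> (Kmat k r Q *\<^sub>v v) = (\<Sum>x\<in>sample_space k r. (Fv r k v x)\<^sup>2 * pmf Q x)"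
    unfolding QF[OF QS v] E_sum[OF QS] ..
  also have "\<dots> \<le> (\<Sum>x\<in>sample_space k r. (real k * (\<Sum>i<k. (u i (x i))\<^sup>2)) * pmf Q x)"
  proof (rule sum_mono)
    fix x
    have "(Fv r k v x)\<^sup>2 \<le> (\<Sum>i<k. (u i (x i))\<^sup>2) * real (card {..<k})"
      unfolding Fveq by (rule sum_squared_le_sum_of_squares)
    thus "(Fv r k v x)\<^sup>2 * pmf Q x \<le> (real k * (\<Sum>i<k. (u i (x i))\<^sup>2)) * pmf Q x"
      by (intro mult_right_mono) (auto simp: mult.commute)
  qed
  also have "\<dots> = real k * (\<Sum>i<k. \<Sum>x\<in>sample_space k r. (u i (x i))\<^sup>2 * pmf Q x)"
    by (simp add: sum_distrib_left sum_distrib_right mult.assoc sum.swap[of _ "sample_space k r"])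
  also have "\<dots> = real k * (\<Sum>i<k. \<Sum>a<r i. (u i a)\<^sup>2 * marg Q i a)"
    by (intro arg_cong[where f = "\<lambda>x. real k * x"] sum.cong refl single_E[OF QS]) auto
  also have "\<dots> \<le> real k * (\<Sum>i<k. \<Sum>a<r i. (u i a)\<^sup>2 * (?M * marg P i a))"
    by (intro mult_left_mono sum_mono) (auto intro: Mx_ge)
  also have "\<dots> = real k * ?M * SP" unfolding SP_def
    by (simp add: sum_distrib_left sum_distrib_right mult_ac)
  also have "\<dots> \<le> real k * ?M * ((v \<bullet> (Kmat k r P *\<^sub>v v)) / ?l)"
    by (intro mult_left_mono SPle) (use Mx_nonneg in auto)
  finally show ?thesis by simp
qed

lemma sup_eq: "transfer_coeff P Q (additive_class k) =
   (SUP v \<in> carrier_vec (\<Sum>i<k. r i). eratio (v \<bullet> (Kmat k r Q *\<^sub>v v)) (v \<bullet> (Kmat k r P *\<^sub>v v)))"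
proof -
  let ?N = "offs r k"
  let ?S = "sample_space k r"
  let ?F = "additive_class k"
  have N: "(\<Sum>i<k. r i) = ?N" by (simp add: offs_def)
  define T where "T v = eratio (measure_pmf.expectation Q (\<lambda>x. (Fv r k v x)\<^sup>2))
       (measure_pmf.expectation P (\<lambda>x. (Fv r k v x)\<^sup>2))" for v
  define U where "U fg = eratio (measure_pmf.expectation Q (\<lambda>x. (fst fg x - snd fg x)\<^sup>2))
        (measure_pmf.expectation P (\<lambda>x. (fst fg x - snd fg x)\<^sup>2))" for fg :: "((nat \<Rightarrow> nat) \<Rightarrow> real) \<times> ((nat \<Rightarrow> nat) \<Rightarrow> real)"
  have R: "(SUP v \<in> carrier_vec ?N. eratio (v \<bullet> (Kmat k r Q *\<^sub>v v)) (v \<bullet> (Kmat k r P *\<^sub>v v)))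
     = (SUP v \<in> carrier_vec ?N. T v)"
    by (rule SUP_cong) (simp_all add: T_def QF[OF PS] QF[OF QS])
  have L: "transfer_coeff P Q ?F = (SUP fg \<in> ?F \<times> ?F. U fg)" unfolding transfer_coeff_def U_def ..
  have EE: "measure_pmf.expectation R h1 = measure_pmf.expectation R h2"
    if RS: "set_pmf R \<subseteq> ?S" and h: "\<And>x. x \<in> ?S \<Longrightarrow> h1 x = h2 x" for R and h1 h2 :: "(nat \<Rightarrow> nat) \<Rightarrow> real"
  proof -
    have "(\<Sum>x\<in>?S. h1 x * pmf R x) = (\<Sum>x\<in>?S. h2 x * pmf R x)" using h by (intro sum.cong) auto
    thus ?thesis using E_sum[OF RS, of h1] E_sum[OF RS, of h2] by simp
  qed
  have le1: "(SUP fg \<in> ?F \<times> ?F. U fg) \<le> (SUP v \<in> carrier_vec ?N. T v)"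
  proof (rule SUP_mono)
    fix fg assume "fg \<in> ?F \<times> ?F"
    then obtain fs gs where f: "fst fg = (\<lambda>x. \<Sum>i<k. fs i (x i))" and g: "snd fg = (\<lambda>x. \<Sum>i<k. gs i (x i))"
      unfolding additive_class_def by auto
    define v where "v = Matrix.vec ?N (\<lambda>p. fs (blk r p) (pos r p) - gs (blk r p) (pos r p))"
    have v: "v \<in> carrier_vec ?N" unfolding v_def by simp
    have Fx: "Fv r k v x = fst fg x - snd fg x" if x: "x \<in> ?S" for x
    proof -
      have "Fv r k v x = (\<Sum>i<k. fs i (x i) - gs i (x i))" unfolding Fv_def
        by (intro sum.cong refl) (use S_mem[OF x] in \<open>simp add: v_def offs_lt blk_off pos_off\<close>)
      thus ?thesis unfolding f g by (simp add: sum_subtractf)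
    qed
    have "U fg = T v" unfolding U_def T_def
      by (subst EE[OF QS, of _ "\<lambda>x. (Fv r k v x)\<^sup>2"], simp add: Fx, subst EE[OF PS, of _ "\<lambda>x. (Fv r k v x)\<^sup>2"]) (auto simp: Fx)
    thus "\<exists>v\<in>carrier_vec ?N. U fg \<le> T v" using v by auto
  qed
  have le2: "(SUP v \<in> carrier_vec ?N. T v) \<le> (SUP fg \<in> ?F \<times> ?F. U fg)"
  proof (rule SUP_mono)
    fix v :: "real Matrix.vec" assume v: "v \<in> carrier_vec ?N"
    have f: "Fv r k v \<in> ?F" unfolding additive_class_def Fv_def
      by (auto intro!: exI[of _ "\<lambda>i a. v $ (offs r i + a)"])
    have g: "(\<lambda>x. 0) \<in> ?F" unfolding additive_class_def
      by (auto intro!: exI[of _ "\<lambda>i a. 0"])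
    have "U (Fv r k v, \<lambda>x. 0) = T v" unfolding U_def T_def by simp
    thus "\<exists>fg\<in>?F \<times> ?F. T v \<le> U fg" using f g by (intro bexI[of _ "(Fv r k v, \<lambda>x. 0)"]) auto
  qed
  show ?thesis unfolding L N R using le1 le2 by (rule antisym)
qed

lemma main_in:
  shows "(transfer_coeff P Q (additive_class k) =
           (SUP v \<in> carrier_vec (\<Sum>i<k. r i).
              eratio (scalar_prod v (Kmat k r Q *\<^sub>v v)) (scalar_prod v (Kmat k r P *\<^sub>v v)))) \<and>
         transfer_coeff P Q (additive_class k) \<le>
           (if kth_smallest_eig k (normalize_mat (Kmat k r P)) = 0 then \<infinity>
            else ereal (real k / kth_smallest_eig k (normalize_mat (Kmat k r P))
                   * (MAX (i, t) \<in> Sigma {..<k} (\<lambda>i. {..<r i}). marg Q i t / marg P i t)))"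
proof -
  let ?N = "offs r k"
  let ?l = "kth_smallest_eig k (normalize_mat (Kmat k r P))"
  let ?M = "(MAX (i, t) \<in> Sigma {..<k} (\<lambda>i. {..<r i}). marg Q i t / marg P i t)"
  have N: "(\<Sum>i<k. r i) = ?N" by (simp add: offs_def)
  have k1: "1 \<le> k" using k2 by simp
  have l0: "?l \<ge> 0"
    by (rule core(1)[OF A_carrier A_sym psd Gm_carrier ker injG k1 k_le_N zero_carrier_vec])
  have bnd: "transfer_coeff P Q (additive_class k) \<le>
           (if ?l = 0 then \<infinity> else ereal (real k / ?l * ?M))"
  proof (cases "?l = 0")
    case False
    hence lpos: "?l > 0" using l0 by simp
    define C where "C = real k / ?l * ?M"
    have C0: "C \<ge> 0" unfolding C_def using lpos Mx_nonneg by simp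
    have "transfer_coeff P Q (additive_class k) \<le> ereal C"
      unfolding sup_eq N
    proof (rule SUP_least)
      fix v :: "real Matrix.vec" assume v: "v \<in> carrier_vec ?N"
      define a where "a = v \<bullet> (Kmat k r Q *\<^sub>v v)"
      define b where "b = v \<bullet> (Kmat k r P *\<^sub>v v)"
      have a0: "a \<ge> 0" unfolding a_def by (rule qf_nonneg[OF QS v])
      have b0: "b \<ge> 0" unfolding b_def by (rule qf_nonneg[OF PS v])
      have ab: "a \<le> C * b" unfolding a_def b_def C_def using bound_v[OF lpos v] by simp
      show "eratio a b \<le> ereal C"
      proof (cases "b = 0")
        case True
        hence "a = 0" using ab a0 by simp
        thus ?thesis using True C0 by (simp add: eratio_def)
      next
        case False
        hence "b > 0" using b0 by simp
        hence "a / b \<le> C" using ab by (simp add: divide_le_eq)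
        thus ?thesis using False by (simp add: eratio_def)
      qed
    qed
    thus ?thesis using False unfolding C_def by simp
  qed simp
  show ?thesis using sup_eq bnd by simp
qed

end

theorem mainTheorem3:
  fixes k :: nat and r :: "nat \<Rightarrow> nat" and P Q :: "(nat \<Rightarrow> nat) pmf"
  assumes "k \<ge> 2"
    and "set_pmf P \<subseteq> sample_space k r"
    and "set_pmf Q \<subseteq> sample_space k r"
    and "\<And>i t. i < k \<Longrightarrow> t < r i \<Longrightarrow> marg P i t > 0"
  shows "(transfer_coeff P Q (additive_class k) =
           (SUP v \<in> carrier_vec (\<Sum>i<k. r i).
              eratio (scalar_prod v (Kmat k r Q *\<^sub>v v)) (scalar_prod v (Kmat k r P *\<^sub>v v)))) \<and>
         transfer_coeff P Q (additive_class k) \<le>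
           (if kth_smallest_eig k (normalize_mat (Kmat k r P)) = 0 then \<infinity>
            else ereal (real k / kth_smallest_eig k (normalize_mat (Kmat k r P))
                   * (MAX (i, t) \<in> Sigma {..<k} (\<lambda>i. {..<r i}). marg Q i t / marg P i t)))"
  by (rule main_in[OF assms])


end
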